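(* Let $k\geq 8$ and $2k+1\leq n\leq 3k$ be integers, and let $h(n,k)=\binom{n-1}{k-1}-\binom{n-k-1}{k-1}+1$. Then \[ \binom{n-2}{k-2}+2\binom{n-3}{k-2}+\frac{h(n,k)^2}{\binom{n-2}{k-2}+2\binom{n-3}{k-2}}>2\binom{n-1}{k-1}. \] *)

theory Defs
  imports Complex_Main
begin

definition h :: "nat \<Rightarrow> nat \<Rightarrow> real" where
  "h n k = real ((n - 1) choose (k - 1)) - real ((n - k - 1) choose (k - 1)) + 1"

end

theory Submission
  imports Defs
begin

lemma poch_num: "pochhammer a (numeral n) = a * pochhammer (a + 1) (pred_numeral n)"
  by (simp add: numeral_eq_Suc pochhammer_rec)

lemma fin_nat:
  fixes k m :: nat
  assumes "8 \<le> k" "k \<le> 15" "1 \<le> m" "m \<le> k"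
  shows "2*(2*k+m-1)^2*(2*k+m-2)^2 * pochhammer (m+1) (k-1) \<le> (k+m)^2*m^2*pochhammer (k+m+1) (k-1)"
proof -
  have "k \<in> {8..<16}" using assms by simp
  then have "k \<in> set [8..<16]" by (simp only: set_upt)
  then have hk: "k = 8 \<or> k = 9 \<or> k = 10 \<or> k = 11 \<or> k = 12 \<or> k = 13 \<or> k = 14 \<or> k = 15" by (simp add: upt_rec eval_nat_numeral)
  have "m \<in> {1..<16}" using assms by simp
  then have "m \<in> set [1..<16]" by (simp only: set_upt)
  then have hm: "m = 1 \<or> m = 2 \<or> m = 3 \<or> m = 4 \<or> m = 5 \<or> m = 6 \<or> m = 7 \<or> m = 8 \<or> m = 9 \<or> m = 10 \<or> m = 11 \<or> m = 12 \<or> m = 13 \<or> m = 14 \<or> m = 15" by (simp add: upt_rec eval_nat_numeral)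
  show ?thesis using hk hm assms(4)
    by (elim disjE) (simp_all add: poch_num del: One_nat_def)
qed

lemma poch_grow:
  fixes a K :: real and r :: nat
  assumes "a > 0" "a + r \<le> 2*K + 1"
  shows "(3/2)^r * pochhammer a r \<le> pochhammer (a+K) r"
  using assms
proof (induction r arbitrary: a)
  case 0
  then show ?case by simp
next
  case (Suc r)
  have IH: "(3/2)^r * pochhammer (a+1) r \<le> pochhammer (a+1+K) r"
    using Suc.IH[of "a+1"] Suc.prems by simp
  have p0: "0 \<le> pochhammer (a+1) r" using Suc.prems by (intro less_imp_le pochhammer_pos) simp
  have h1: "3/2*a \<le> a + K" using Suc.prems by simp
  have "(3/2)^(Suc r) * pochhammer a (Suc r) = (3/2*a) * ((3/2)^r * pochhammer (a+1) r)"
    by (simp add: pochhammer_rec)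
  also have "\<dots> \<le> (a+K) * pochhammer (a+1+K) r"
    using IH h1 p0 Suc.prems by (intro mult_mono) auto
  also have "\<dots> = pochhammer (a+K) (Suc r)"
    by (simp add: pochhammer_rec add_ac)
  finally show ?case .
qed

lemma big_real:
  fixes k m :: nat
  assumes "16 \<le> k" "1 \<le> m" "m \<le> k"
  shows "2*(2*real k+real m-1)^2*(2*real k+real m-2)^2 * pochhammer (real m+1) (k-1)
     \<le> (real k+real m)^2*(real m)^2*pochhammer (real k+real m+1) (k-1)"
proof -
  define s where "s = real k + real m"
  define X where "X = 2*real k+real m-1"
  define Y where "Y = 2*real k+real m-2"
  define P where "P = pochhammer (real m+3) (k-3)"
  define Q where "Q = pochhammer (real m+3+real k) (k-3)"
  have km: "k - 1 = Suc (Suc (k-3))" using assms by simp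
  have eP: "pochhammer (real m+1) (k-1) = (real m+1)*(real m+2)*P"
    unfolding km P_def by (simp add: pochhammer_rec add_ac mult_ac numeral_eq_Suc)
  have eQ: "pochhammer (s+1) (k-1) = (s+1)*(s+2)*Q"
    unfolding km Q_def s_def by (simp add: pochhammer_rec add_ac mult_ac numeral_eq_Suc)
  have P0: "0 \<le> P" unfolding P_def by (intro less_imp_le pochhammer_pos) simp
  have "(3/2)^(k-3) * P \<le> Q"
    unfolding P_def Q_def using assms by (intro poch_grow) auto
  moreover have "(192::real) \<le> (3/2)^(k-3)"
  proof -
    have "(192::real) \<le> (3/2)^13" by (simp add: power_divide)
    also have "\<dots> \<le> (3/2)^(k-3)" using assms by (intro power_increasing) auto
    finally show ?thesis .
  qed
  ultimately have PQ: "192 * P \<le> Q" using P0 by (meson mult_right_mono order_trans)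
  have m1: "(1::real) \<le> real m" using assms by simp
  have X0: "0 \<le> X" "X \<le> 2*s" using assms unfolding X_def s_def by auto
  have Y0: "0 \<le> Y" "Y \<le> 2*s" using assms unfolding Y_def s_def by auto
  have XY: "X*Y \<le> 4*s^2" using mult_mono[OF X0(2) Y0(2)] X0 Y0 by (simp add: power2_eq_square)
  have XY2: "(X*Y)^2 \<le> (4*s^2)^2" using XY X0 Y0 by (intro power_mono) auto
  have mq: "1 * real m \<le> real m * real m" using mult_right_mono[OF m1, of "real m"] by simp
  have mm0: "(real m+1)*(real m+2) = real m * real m + 3*real m + 2" by (simp add: algebra_simps)
  have mm: "(real m+1)*(real m+2) \<le> 6*(real m)^2" unfolding power2_eq_square mm0 using mq m1 by linarith
  have s0: "0 \<le> s" unfolding s_def by simp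
  have "2*X^2*Y^2*((real m+1)*(real m+2)) = 2*(X*Y)^2*((real m+1)*(real m+2))"
    by (simp add: power_mult_distrib)
  also have "\<dots> \<le> 2*(4*s^2)^2*(6*(real m)^2)"
    by (rule mult_mono) (use XY2 mm in auto)
  also have "\<dots> = 192*s^2*(real m)^2*(s*s)" by (simp add: power2_eq_square)
  also have "\<dots> \<le> 192*s^2*(real m)^2*((s+1)*(s+2))"
    using s0 by (intro mult_left_mono) (auto simp: algebra_simps)
  finally have main: "2*X^2*Y^2*((real m+1)*(real m+2)) \<le> 192*s^2*(real m)^2*((s+1)*(s+2))" .
  have "2*X^2*Y^2*((real m+1)*(real m+2)*P) = (2*X^2*Y^2*((real m+1)*(real m+2)))*P" by simp
  also have "\<dots> \<le> (192*s^2*(real m)^2*((s+1)*(s+2)))*P" using main P0 by (rule mult_right_mono)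
  also have "\<dots> = s^2*(real m)^2*((s+1)*(s+2))*(192*P)" by simp
  also have "\<dots> \<le> s^2*(real m)^2*((s+1)*(s+2))*Q" using PQ s0 by (intro mult_left_mono) auto
  finally have calc: "2*X^2*Y^2*((real m+1)*(real m+2)*P) \<le> s^2*(real m)^2*((s+1)*(s+2))*Q" .
  show ?thesis unfolding X_def[symmetric] Y_def[symmetric] s_def[symmetric] eP eQ using calc by (simp add: mult_ac)
qed


lemma key:
  fixes k m :: nat
  assumes "8 \<le> k" "1 \<le> m" "m \<le> k"
  shows "2*(2*real k+real m-1)^2*(2*real k+real m-2)^2 * pochhammer (real m+1) (k-1)
     \<le> (real k+real m)^2*(real m)^2*pochhammer (real k+real m+1) (k-1)"
proof (cases "k \<le> 15")
  case True
  have "real (2*(2*k+m-1)^2*(2*k+m-2)^2 * pochhammer (m+1) (k-1)) \<le> real ((k+m)^2*m^2*pochhammer (k+m+1) (k-1))"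
    using fin_nat[OF assms(1) True assms(2,3)] by (simp only: of_nat_le_iff)
  then show ?thesis using assms by (simp add: of_nat_diff pochhammer_of_nat[symmetric] add_ac)
next
  case False
  then show ?thesis using big_real[of k m] assms by simp
qed

theorem lemma2p8:
  fixes n k :: nat
  assumes "k \<ge> 8" and "2 * k + 1 \<le> n" and "n \<le> 3 * k"
  shows "real ((n - 2) choose (k - 2)) + 2 * real ((n - 3) choose (k - 2))
          + (h n k)^2 / (real ((n - 2) choose (k - 2)) + 2 * real ((n - 3) choose (k - 2)))
         > 2 * real ((n - 1) choose (k - 1))"
proof -
  define m where "m = n - 2*k"
  have nm: "n = 2*k+m" and m1: "1 \<le> m" and mk: "m \<le> k" using assms unfolding m_def by auto
  define B where "B = real ((n - 1) choose (k - 1))"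
  define c where "c = real ((n - k - 1) choose (k - 1))"
  define a1 where "a1 = real ((n - 2) choose (k - 2))"
  define a2 where "a2 = real ((n - 3) choose (k - 2))"
  define A where "A = a1 + 2*a2"
  define X where "X = 2*real k+real m-1"
  define Y where "Y = 2*real k+real m-2"
  define s where "s = real k + real m"
  have X: "real (n-1) = X" unfolding X_def nm using assms by (simp add: of_nat_diff)
  have Y: "real (n-2) = Y" unfolding Y_def nm using assms by (simp add: of_nat_diff)
  have S: "real (n-k) = s" unfolding s_def nm by simp
  have X0: "X > 0" "Y > 0" "s > 0" using assms unfolding X_def Y_def s_def by auto
  have e1n: "(k-1) * ((n-1) choose (k-1)) = (n-1) * ((n-2) choose (k-2))"
    using binomial_absorption[of "k-2" "n-1"] assms by (simp add: Suc_diff_Suc numeral_2_eq_2)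
  have e1: "a1 * X = B * (real k - 1)"
  proof -
    have "real ((k-1) * ((n-1) choose (k-1))) = real ((n-1) * ((n-2) choose (k-2)))" using e1n by simp
    then show ?thesis unfolding a1_def B_def X[symmetric] using assms by (simp add: of_nat_diff mult_ac)
  qed
  have e2n: "(n-k) * ((n-2) choose (k-2)) = (n-2) * ((n-3) choose (k-2))"
  proof -
    have "n-2-(k-2) = n-k" "n-2-1 = n-3" using assms by auto
    then show ?thesis using binomial_absorb_comp[of "n-2" "k-2"] by simp
  qed
  have e2: "s * a1 = Y * a2"
  proof -
    have "real ((n-k) * ((n-2) choose (k-2))) = real ((n-2) * ((n-3) choose (k-2)))" using e2n by simp
    then show ?thesis unfolding a1_def a2_def Y[symmetric] S[symmetric] by simp
  qed
  have eB: "B = pochhammer (real k+real m+1) (k-1) / fact (k-1)"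
    unfolding B_def binomial_gbinomial gbinomial_pochhammer' using assms by (simp add: nm of_nat_diff)
  have ec: "c = pochhammer (real m+1) (k-1) / fact (k-1)"
    unfolding c_def binomial_gbinomial gbinomial_pochhammer' using assms by (simp add: nm of_nat_diff)
  have K: "2*X^2*Y^2*c \<le> s^2*(real m)^2*B"
  proof -
    have "2*X^2*Y^2*pochhammer (real m+1) (k-1) / fact (k-1) \<le> s^2*(real m)^2*pochhammer (real k+real m+1) (k-1) / fact (k-1)"
      using key[OF assms(1) m1 mk] unfolding X_def Y_def s_def by (intro divide_right_mono) auto
    then show ?thesis unfolding eB ec by simp
  qed
  have B0: "B > 0" unfolding B_def using assms by simp
  have a10: "a1 > 0" unfolding a1_def using assms by simp
  have a20: "a2 \<ge> 0" unfolding a2_def by simp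
  have A0: "A > 0" unfolding A_def using a10 a20 by simp
  have cB: "c \<le> B" unfolding c_def B_def by (simp add: binomial_right_mono)
  have c0: "c \<ge> 0" unfolding c_def by simp
  define D where "D = B - A"
  have "D*(X*Y) = B*(X*Y) - (a1*X)*Y - 2*(Y*a2)*X" unfolding D_def A_def by algebra
  also have "\<dots> = B*(X*Y) - B*(real k - 1)*Y - 2*(s*a1)*X" unfolding e1 e2 by simp
  also have "\<dots> = B*(X*Y) - B*(real k - 1)*Y - 2*s*(a1*X)" by simp
  also have "\<dots> = B*(X*Y - (real k - 1)*Y - 2*s*(real k - 1))" unfolding e1 by algebra
  also have "\<dots> = B*s*real m" unfolding X_def Y_def s_def by algebra
  finally have DXY: "D*(X*Y) = B*s*real m" .
  have "2*B*c*(X*Y)^2 = B*(2*X^2*Y^2*c)" by algebra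
  also have "\<dots> \<le> B*(s^2*(real m)^2*B)" using K B0 by (intro mult_left_mono) auto
  also have "\<dots> = (D*(X*Y))^2" unfolding DXY by algebra
  also have "\<dots> = D^2*(X*Y)^2" by algebra
  finally have "2*B*c*(X*Y)^2 \<le> D^2*(X*Y)^2" .
  then have DD: "2*B*c \<le> D^2" using X0 by simp
  have hh: "h n k = B - c + 1" unfolding h_def B_def c_def by simp
  have "(B-c)^2 < (h n k)^2" unfolding hh using cB by (intro power_strict_mono) auto
  then have "B^2 - 2*B*c < (h n k)^2" by (simp add: power2_eq_square algebra_simps) (smt (verit) c0 power2_eq_square mult_nonneg_nonneg)
  then have "2*A*B < A*A + (h n k)^2" using DD unfolding D_def by (simp add: power2_eq_square algebra_simps)
  then have "2*B < A + (h n k)^2/A" using A0 by (simp add: field_simps)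
  then show ?thesis unfolding A_def a1_def a2_def B_def by simp
qed

end
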